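(* Let $n\ge2$, let $x_1,\dots,x_n$ be commuting indeterminates over $\mathbb{K}=\mathbb{C}(q)$, and for $k\ge0$ let $\mathrm{Ch}_{n,k}=\sum_{i=1}^n x_i^k\prod_{j\ne i,\,1\le j\le n}\frac{qx_i-q^{-1}x_j}{x_i-x_j}$. For $k\ge1$ and $1\le i\le \min(k,n)$ let $\lambda^i_k=(k-i+1)\epsilon_1+\epsilon_2+\cdots+\epsilon_i$ (the partition $(k-i+1,1^{i-1})$), and let $\mathrm{Ch}\,L_{\lambda^i_k}$ denote the character of the irreducible $\mathfrak{gl}_n$-module of highest weight $\lambda^i_k$, written in the variables $x_j=e^{\epsilon_j}$ (i.e. the Schur polynomial $s_{(k-i+1,1^{i-1})}(x_1,\dots,x_n)$); set $\mathrm{Ch}\,L_{\lambda^i_k}=0$ if $i>k$. Then for every $k=1,2,\dots$, $\sum_{i=1}^n(-1)^{i-1}q^{n-2i+1}\,\mathrm{Ch}\,L_{\lambda^i_k}=\mathrm{Ch}_{n,k}$.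
   Context: By the Weyl character formula, $\mathrm{Ch}\,L_{\lambda}=\frac{\sum_{w\in S_n}\mathrm{sign}(w)e^{w(\lambda+\tilde\rho)}}{\prod_{i<j}(e^{\epsilon_i}-e^{\epsilon_j})}$ with $\tilde\rho=\sum_{i=1}^n(n-i)\epsilon_i$, where the symmetric group $S_n$ permutes the $\epsilon_i$ and $e^{\sum a_i\epsilon_i}=\prod x_i^{a_i}$. *)

theory Defs
  imports Complex_Main "HOL-Combinatorics.Permutations"
begin

text \<open>Variables x_1..x_n are represented 0-based as x 0, ..., x (n-1).
  A weight lambda = sum a_j eps_j is a function lam :: nat => nat (index j < n).\<close>

text \<open>Weyl character formula: numerator alternant sum over w in S_n of
  sign(w) e^(w(lambda + rho)), with rho = sum (n-i) eps_i, divided by the Vandermonde.\<close>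
definition weyl_char :: "nat \<Rightarrow> (nat \<Rightarrow> nat) \<Rightarrow> (nat \<Rightarrow> complex) \<Rightarrow> complex" where
  "weyl_char n lam x =
     (\<Sum>w | w permutes {..<n}. of_int (sign w) * (\<Prod>j<n. x (w j) ^ (lam j + (n - 1 - j))))
     / (\<Prod>i<n. \<Prod>j\<in>{i<..<n}. (x i - x j))"

text \<open>lambda^i_k = (k-i+1) eps_1 + eps_2 + ... + eps_i (i 1-based; here index j 0-based).\<close>
definition hook_weight :: "nat \<Rightarrow> nat \<Rightarrow> nat \<Rightarrow> nat" where
  "hook_weight k i j = (if j = 0 then k - i + 1 else if j < i then 1 else 0)"

definition ChL_hook :: "nat \<Rightarrow> nat \<Rightarrow> nat \<Rightarrow> (nat \<Rightarrow> complex) \<Rightarrow> complex" where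
  "ChL_hook n k i x = (if i > k then 0 else weyl_char n (hook_weight k i) x)"

definition Ch_nk :: "nat \<Rightarrow> nat \<Rightarrow> complex \<Rightarrow> (nat \<Rightarrow> complex) \<Rightarrow> complex" where
  "Ch_nk n k q x = (\<Sum>i<n. x i ^ k *
      (\<Prod>j\<in>{..<n} - {i}. (q * x i - inverse q * x j) / (x i - x j)))"

end

theory Submission
  imports Defs "Jordan_Normal_Form.Determinant"
begin

definition vdm :: "nat \<Rightarrow> (nat \<Rightarrow> complex) \<Rightarrow> complex" where
  "vdm n x = (\<Prod>i<n. \<Prod>j\<in>{i<..<n}. (x i - x j))"

definition esym :: "nat \<Rightarrow> nat set \<Rightarrow> (nat \<Rightarrow> complex) \<Rightarrow> complex" where
  "esym m S w = (\<Sum>B | B \<subseteq> S \<and> card B = m. \<Prod>j\<in>B. w j)"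

definition skip :: "nat \<Rightarrow> nat \<Rightarrow> nat" where
  "skip a i = (if i < a then i else Suc i)"

lemma prod_expand:
  "(\<Prod>i<N. u + w i) = (\<Sum>m\<le>N. esym m {..<N} w * u ^ (N - m))"
proof -
  have "(\<Prod>i<N. w i + u) = (\<Sum>X\<in>Pow {..<N}. (\<Prod>x\<in>X. w x) * (\<Prod>x\<in>{..<N}-X. u))"
    by (rule prod_add) simp
  also have "\<dots> = (\<Sum>X\<in>Pow {..<N}. (\<Prod>x\<in>X. w x) * u ^ (N - card X))"
    by (intro sum.cong refl) (auto simp: card_Diff_subset finite_subset)
  also have "\<dots> = (\<Sum>m\<le>N. \<Sum>X | X \<in> Pow {..<N} \<and> card X = m. (\<Prod>x\<in>X. w x) * u ^ (N - card X))"
    by (rule sum.group[symmetric]) (auto, metis card_lessThan card_mono finite_lessThan)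
  also have "\<dots> = (\<Sum>m\<le>N. esym m {..<N} w * u ^ (N - m))"
    unfolding esym_def sum_distrib_right
    by (intro sum.cong refl) auto
  finally show ?thesis by (simp add: add.commute)
qed

lemma esym_scale: "esym m S (\<lambda>j. c * w j) = c ^ m * esym m S w"
  unfolding esym_def sum_distrib_left
  by (intro sum.cong refl) (auto simp: prod.distrib)

lemma vdm_Suc: "vdm (Suc n) x = vdm n x * (\<Prod>i<n. x i - x n)"
proof -
  have e: "{n<..<Suc n} = {}" by auto
  have "vdm (Suc n) x = (\<Prod>i<n. \<Prod>j\<in>{i<..<Suc n}. (x i - x j))"
    unfolding vdm_def by (simp add: lessThan_Suc e)
  also have "\<dots> = (\<Prod>i<n. (\<Prod>j\<in>{i<..<n}. (x i - x j)) * (x i - x n))"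
  proof (intro prod.cong refl)
    fix i assume "i \<in> {..<n}"
    then have "{i<..<Suc n} = insert n {i<..<n}" by auto
    then show "(\<Prod>j\<in>{i<..<Suc n}. (x i - x j)) = (\<Prod>j\<in>{i<..<n}. (x i - x j)) * (x i - x n)"
      by (simp add: mult.commute)
  qed
  also have "\<dots> = vdm n x * (\<Prod>i<n. x i - x n)"
    unfolding vdm_def prod.distrib ..
  finally show ?thesis .
qed

lemma vdm_cong: "(\<And>i. i < n \<Longrightarrow> x i = y i) \<Longrightarrow> vdm n x = vdm n y"
  unfolding vdm_def by (intro prod.cong refl) auto

lemma skip_image: "a \<le> m \<Longrightarrow> skip a ` {..<m} = {..<Suc m} - {a}"
proof
  show "skip a ` {..<m} \<subseteq> {..<Suc m} - {a}" by (auto simp: skip_def)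
next
  assume am: "a \<le> m"
  show "{..<Suc m} - {a} \<subseteq> skip a ` {..<m}"
  proof
    fix j assume j: "j \<in> {..<Suc m} - {a}"
    show "j \<in> skip a ` {..<m}"
    proof (cases "j < a")
      case True
      then have "skip a j = j" by (simp add: skip_def)
      then show ?thesis using True am by (metis image_eqI lessThan_iff order_less_le_trans)
    next
      case False
      with j have "j > a" by auto
      then have "skip a (j - 1) = j" "j - 1 < m" using j by (auto simp: skip_def)
      then show ?thesis by (metis image_eqI lessThan_iff)
    qed
  qed
qed

lemma skip_inj: "inj (skip a)"
  unfolding skip_def inj_def by auto

lemma prod_skip: "a \<le> m \<Longrightarrow> (\<Prod>i<m. f (skip a i)) = (\<Prod>j\<in>{..<Suc m} - {a}. f j)"
  using prod.reindex[of "skip a" "{..<m}" f] skip_inj[of a]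
  by (simp add: skip_image inj_on_subset)

lemma prod_neg_flip: "(\<Prod>j<n. c - x j) = (-1) ^ n * (\<Prod>j<n. x j - (c::complex))"
  by (induction n) (auto simp: algebra_simps)

lemma vdm_remove:
  assumes "a < n"
  shows "(-1) ^ a * vdm (n - 1) (\<lambda>i. x (skip a i)) * (\<Prod>j\<in>{..<n} - {a}. x a - x j) = vdm n x"
  using assms
proof (induction n arbitrary: a)
  case 0 then show ?case by simp
next
  case (Suc n)
  show ?case
  proof (cases "a = n")
    case True
    have A: "vdm n (\<lambda>i. x (skip a i)) = vdm n x"
      by (rule vdm_cong) (simp add: skip_def True)
    have B: "{..<Suc n} - {a} = {..<n}" using True by auto
    have C: "(-1) ^ n * (\<Prod>j<n. x n - x j) = (\<Prod>j<n. x j - x n)"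
      using prod_neg_flip[where n=n and c="x n" and x=x] by simp
    have "(-1) ^ a * vdm (Suc n - 1) (\<lambda>i. x (skip a i)) * (\<Prod>j\<in>{..<Suc n} - {a}. x a - x j)
       = vdm n x * ((-1) ^ n * (\<Prod>j<n. x n - x j))"
      unfolding diff_Suc_1 A B by (simp only: True mult_ac)
    also have "\<dots> = vdm (Suc n) x" unfolding C vdm_Suc ..
    finally show ?thesis .
  next
    case False
    with Suc.prems have an: "a < n" by simp
    then obtain n' where n': "n = Suc n'" by (cases n) auto
    have IH: "(-1) ^ a * vdm n' (\<lambda>i. x (skip a i)) * (\<Prod>j\<in>{..<n} - {a}. x a - x j) = vdm n x"
      using Suc.IH[OF an] n' by simp
    have sk: "skip a n' = n" using an n' by (simp add: skip_def)
    have v: "vdm n (\<lambda>i. x (skip a i)) = vdm n' (\<lambda>i. x (skip a i)) * (\<Prod>j\<in>{..<n} - {a}. x j - x n)"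
      unfolding n' vdm_Suc using sk prod_skip[of a n' "\<lambda>j. x j - x n"] an n' by simp
    have s: "{..<Suc n} - {a} = insert n ({..<n} - {a})" using an by auto
    have P1: "(\<Prod>j\<in>{..<Suc n} - {a}. x a - x j) = (x a - x n) * (\<Prod>j\<in>{..<n} - {a}. x a - x j)"
      unfolding s by simp
    have P2: "(\<Prod>j<n. x j - x n) = (x a - x n) * (\<Prod>j\<in>{..<n} - {a}. x j - x n)"
    proof -
      have "{..<n} = insert a ({..<n} - {a})" using an by auto
      then show ?thesis
        by (metis Diff_iff finite_Diff finite_lessThan insertCI prod.insert)
    qed
    have "(-1) ^ a * vdm (Suc n - 1) (\<lambda>i. x (skip a i)) * (\<Prod>j\<in>{..<Suc n} - {a}. x a - x j)
       = ((-1) ^ a * vdm n' (\<lambda>i. x (skip a i)) * (\<Prod>j\<in>{..<n} - {a}. x a - x j))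
         * ((x a - x n) * (\<Prod>j\<in>{..<n} - {a}. x j - x n))"
      unfolding diff_Suc_1 v P1 by (simp only: mult_ac)
    also have "\<dots> = vdm (Suc n) x" unfolding IH P2[symmetric] vdm_Suc ..
    finally show ?thesis .
  qed
qed


definition Amat :: "nat \<Rightarrow> (nat \<Rightarrow> nat) \<Rightarrow> (nat \<Rightarrow> complex) \<Rightarrow> complex mat" where
  "Amat n e x = mat n n (\<lambda>(j,a). x a ^ e j)"

lemma Amat_carrier: "Amat n e x \<in> carrier_mat n n"
  unfolding Amat_def by simp

lemma det_Amat_perm:
  "(\<Sum>w | w permutes {..<n}. of_int (sign w) * (\<Prod>j<n. x (w j) ^ e j)) = det (Amat n e x)"
  unfolding det_def'[OF Amat_carrier] atLeast0LessThan
proof (intro sum.cong refl)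
  fix w assume "w \<in> {w. w permutes {..<n}}"
  then have w: "w permutes {..<n}" by simp
  have "(\<Prod>j<n. x (w j) ^ e j) = (\<Prod>j<n. Amat n e x $$ (j, w j))"
  proof (intro prod.cong refl)
    fix j assume "j \<in> {..<n}"
    then show "x (w j) ^ e j = Amat n e x $$ (j, w j)"
      using permutes_in_image[OF w, of j] by (simp add: Amat_def)
  qed
  then show "of_int (sign w) * (\<Prod>j<n. x (w j) ^ e j) = of_int (sign w) * (\<Prod>j<n. Amat n e x $$ (j, w j))"
    by simp
qed

lemma Amat_cong: "(\<And>a. a < n \<Longrightarrow> x a = y a) \<Longrightarrow> (\<And>j. j < n \<Longrightarrow> e j = f j) \<Longrightarrow> Amat n e x = Amat n f y"
  unfolding Amat_def by (intro eq_matI) auto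

lemma delete_Amat:
  "mat_delete (Amat (Suc n) e x) i c = Amat n (\<lambda>j. e (skip i j)) (\<lambda>a. x (skip c a))"
  unfolding mat_delete_def Amat_def skip_def by (intro eq_matI) auto

lemma laplace_col:
  assumes "c < Suc n"
  shows "det (Amat (Suc n) e x) = (\<Sum>j<Suc n. x c ^ e j * ((-1) ^ (j + c) * det (Amat n (\<lambda>j'. e (skip j j')) (\<lambda>a. x (skip c a)))))"
  unfolding laplace_expansion_column[OF Amat_carrier assms] cofactor_def delete_Amat
  by (intro sum.cong refl) (use assms in \<open>simp add: Amat_def\<close>)

lemma laplace_row0:
  shows "det (Amat (Suc n) e x) = (\<Sum>a<Suc n. x a ^ e 0 * ((-1) ^ a * det (Amat n (\<lambda>j'. e (Suc j')) (\<lambda>b. x (skip a b)))))"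
  unfolding laplace_expansion_row[OF Amat_carrier zero_less_Suc] cofactor_def delete_Amat
  by (intro sum.cong refl) (simp add: Amat_def skip_def)

lemma Amat_same_cols:
  assumes "i < n" "c < n" "i \<noteq> c" "x i = x c"
  shows "det (Amat n e x) = 0"
  by (rule det_identical_columns[OF Amat_carrier assms(3,1,2)])
     (use assms in \<open>auto simp: Amat_def col_def\<close>)

lemma Amat_same_rows:
  assumes "i < n" "c < n" "i \<noteq> c" "e i = e c"
  shows "det (Amat n e x) = 0"
  by (rule det_identical_rows[OF Amat_carrier assms(3,1,2)])
     (use assms in \<open>auto simp: Amat_def row_def\<close>)

lemma det_Amat_0: "det (Amat 0 e x) = 1"
  unfolding det_def'[OF Amat_carrier] by simp


definition gexp :: "nat \<Rightarrow> nat \<Rightarrow> nat \<Rightarrow> nat" where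
  "gexp n m j = (if j < m then n - j else n - 1 - j)"

lemma gexp0: "gexp n 0 = (\<lambda>j. n - 1 - j)"
  unfolding gexp_def by auto

lemma lap_vand:
  "det (Amat (Suc n) (\<lambda>j. n - j) x) = (\<Sum>j<Suc n. x n ^ (n - j) * ((-1) ^ (j + n) * det (Amat n (gexp n j) x)))"
proof -
  have "det (Amat (Suc n) (\<lambda>j. n - j) x) = (\<Sum>j<Suc n. x n ^ (n - j) * ((-1) ^ (j + n) *
      det (Amat n (\<lambda>j'. n - skip j j') (\<lambda>a. x (skip n a)))))"
    by (rule laplace_col) simp
  also have "\<dots> = (\<Sum>j<Suc n. x n ^ (n - j) * ((-1) ^ (j + n) * det (Amat n (gexp n j) x)))"
  proof (intro sum.cong refl)
    fix j
    have "Amat n (\<lambda>j'. n - skip j j') (\<lambda>a. x (skip n a)) = Amat n (gexp n j) x"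
      by (rule Amat_cong) (auto simp: skip_def gexp_def)
    then show "x n ^ (n - j) * ((-1) ^ (j + n) * det (Amat n (\<lambda>j'. n - skip j j') (\<lambda>a. x (skip n a)))) =
      x n ^ (n - j) * ((-1) ^ (j + n) * det (Amat n (gexp n j) x))" by simp
  qed
  finally show ?thesis .
qed

lemma vdm_Suc_expand:
  "vdm (Suc n) x = vdm n x * (\<Sum>m\<le>n. esym m {..<n} x * (- x n) ^ (n - m))"
  unfolding vdm_Suc prod_expand[symmetric] by simp

lemma neg1_pow: "j \<le> n \<Longrightarrow> (-1::complex) ^ (j + n) = (-1) ^ (n - j)"
proof -
  assume "j \<le> n"
  then have e: "j + n = (n - j) + 2 * j" by simp
  have "(-1::complex) ^ (j + n) = (-1) ^ (n - j) * ((-1) ^ 2) ^ j"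
    unfolding e power_add power_mult ..
  then show ?thesis by simp
qed

lemma esym0: "finite S \<Longrightarrow> esym 0 S w = 1"
proof -
  assume S: "finite S"
  have "{B. B \<subseteq> S \<and> card B = 0} = {{}}"
  proof safe
    fix B y assume "B \<subseteq> S" "card B = 0" "y \<in> B"
    then show "y \<in> {}" using S finite_subset by (metis card_0_eq empty_iff)
  qed auto
  then show ?thesis unfolding esym_def by simp
qed

lemma esym_cong: "(\<And>j. j \<in> S \<Longrightarrow> w j = v j) \<Longrightarrow> esym m S w = esym m S v"
  unfolding esym_def by (intro sum.cong refl prod.cong) auto

lemma vdm_zero: "i < n \<Longrightarrow> c < n \<Longrightarrow> i \<noteq> c \<Longrightarrow> x i = x c \<Longrightarrow> vdm n x = 0"
proof -
  assume *: "i < n" "c < n" "i \<noteq> c" "x i = x c"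
  define a b where "a = min i c" and "b = max i c"
  have ab: "a < b" "b < n" "x a = x b" using * unfolding a_def b_def by (auto simp: min_def max_def)
  have "(\<Prod>j\<in>{a<..<n}. (x a - x j)) = 0"
    using ab by (intro prod_zero) auto
  moreover have "a \<in> {..<n}" using ab by simp
  ultimately have "\<exists>i\<in>{..<n}. (\<Prod>j\<in>{i<..<n}. (x i - x j)) = 0" by blast
  then show ?thesis unfolding vdm_def by (intro prod_zero) auto
qed


lemma sum_reflect: "(\<Sum>j\<le>(n::nat). f j) = (\<Sum>r\<le>n. f (n - r))"
  by (rule sum.reindex_bij_witness[of _ "\<lambda>j. n - j" "\<lambda>r. n - r"]) (auto simp: diff_diff_cancel)

lemma coeff:
  assumes L1: "\<And>x. det (Amat n (gexp n 0) x) = vdm n x"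
    and mn: "m \<le> n"
  shows "det (Amat n (gexp n m) x) = esym m {..<n} x * vdm n x"
proof (cases "inj_on x {..<n}")
  case False
  then obtain i c where ic: "i < n" "c < n" "i \<noteq> c" "x i = x c"
    unfolding inj_on_def by auto
  show ?thesis using Amat_same_cols[OF ic] vdm_zero[OF ic] by simp
next
  case inj: True
  define G where "G j = det (Amat n (gexp n j) x)" for j
  define h where "h j = (-1) ^ (n - j) * (G j - esym j {..<n} x * vdm n x)" for j
  have key: "(\<Sum>j\<le>n. h j * y ^ (n - j)) =
      det (Amat (Suc n) (\<lambda>j. n - j) (x(n := y))) - vdm (Suc n) (x(n := y))" for y
  proof -
    have d: "det (Amat (Suc n) (\<lambda>j. n - j) (x(n := y))) = (\<Sum>j\<le>n. (-1) ^ (n - j) * G j * y ^ (n - j))"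
    proof -
      have "det (Amat (Suc n) (\<lambda>j. n - j) (x(n := y))) =
        (\<Sum>j<Suc n. y ^ (n - j) * ((-1) ^ (j + n) * det (Amat n (gexp n j) (x(n := y)))))"
        using lap_vand[of n "x(n := y)"] by simp
      also have "\<dots> = (\<Sum>j\<le>n. (-1) ^ (n - j) * G j * y ^ (n - j))"
        unfolding lessThan_Suc_atMost
      proof (intro sum.cong refl)
        fix j assume "j \<in> {..n}"
        then have "(-1::complex) ^ (j + n) = (-1) ^ (n - j)" by (intro neg1_pow) simp
        moreover have "Amat n (gexp n j) (x(n := y)) = Amat n (gexp n j) x"
          by (rule Amat_cong) auto
        ultimately show "y ^ (n - j) * ((-1) ^ (j + n) * det (Amat n (gexp n j) (x(n := y)))) =
          (-1) ^ (n - j) * G j * y ^ (n - j)" unfolding G_def by simp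
      qed
      finally show ?thesis .
    qed
    have v: "vdm (Suc n) (x(n := y)) = (\<Sum>j\<le>n. (-1) ^ (n - j) * (esym j {..<n} x * vdm n x) * y ^ (n - j))"
    proof -
      have "vdm (Suc n) (x(n := y)) = vdm n (x(n := y)) * (\<Sum>m\<le>n. esym m {..<n} (x(n := y)) * (- y) ^ (n - m))"
        using vdm_Suc_expand[of n "x(n := y)"] by simp
      also have "\<dots> = vdm n x * (\<Sum>m\<le>n. esym m {..<n} x * (- y) ^ (n - m))"
        by (subst vdm_cong[of n _ x], simp, subst esym_cong[of _ _ x], auto)
      also have "\<dots> = (\<Sum>j\<le>n. (-1) ^ (n - j) * (esym j {..<n} x * vdm n x) * y ^ (n - j))"
        unfolding sum_distrib_left
        by (intro sum.cong refl) (simp add: power_minus' mult_ac)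
      finally show ?thesis .
    qed
    show ?thesis unfolding d v h_def sum_subtractf[symmetric]
      by (intro sum.cong refl) (simp add: algebra_simps)
  qed
  have h0: "h 0 = 0"
    unfolding h_def G_def gexp0 L1[unfolded gexp0] esym0[OF finite_lessThan] by simp
  show ?thesis
  proof (cases n)
    case 0
    then show ?thesis using mn L1 esym0[OF finite_lessThan, of 0 x] by (simp add: G_def)
  next
    case (Suc n2)
    define c where "c r = h (n - r)" for r
    have poly: "(\<Sum>r\<le>n2. c r * y ^ r) = det (Amat (Suc n) (\<lambda>j. n - j) (x(n := y))) - vdm (Suc n) (x(n := y))" for y
    proof -
      have "(\<Sum>r\<le>n2. c r * y ^ r) = (\<Sum>r\<le>n. c r * y ^ r)"
        using h0 by (simp add: Suc c_def)
      also have "\<dots> = (\<Sum>j\<le>n. h j * y ^ (n - j))"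
        unfolding c_def by (subst sum_reflect[of _ n]) (intro sum.cong refl, auto)
      finally show ?thesis using key by simp
    qed
    have roots: "x ` {..<n} \<subseteq> {z. (\<Sum>r\<le>n2. c r * z ^ r) = 0}"
    proof
      fix z assume "z \<in> x ` {..<n}"
      then obtain i where i: "i < n" "z = x i" by auto
      have "det (Amat (Suc n) (\<lambda>j. n - j) (x(n := x i))) = 0"
        by (rule Amat_same_cols[of i _ n]) (use i in auto)
      moreover have "vdm (Suc n) (x(n := x i)) = 0"
        by (rule vdm_zero[of i _ n]) (use i in auto)
      ultimately show "z \<in> {z. (\<Sum>r\<le>n2. c r * z ^ r) = 0}" using poly[of z] i by simp
    qed
    have allc: "\<forall>r\<le>n2. c r = 0"
    proof (rule ccontr)
      assume "\<not> (\<forall>r\<le>n2. c r = 0)"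
      then obtain r where r: "r \<le> n2" "c r \<noteq> 0" by auto
      have "card (x ` {..<n}) \<le> card {z. (\<Sum>r\<le>n2. c r * z ^ r) = 0}"
        by (rule card_mono[OF polyfun_roots_finite[where c=c and k=r and n=n2, OF r(2) r(1)] roots])
      also have "\<dots> \<le> n2" by (rule polyfun_roots_card[where c=c and k=r and n=n2, OF r(2) r(1)])
      finally show False using card_image[OF inj] Suc by simp
    qed
    show ?thesis
    proof (cases "m = 0")
      case True
      then show ?thesis using L1 esym0[OF finite_lessThan[of n], of x] by simp
    next
      case False
      have "n - m \<le> n2" using False Suc mn by simp
      then have "c (n - m) = 0" using allc by blast
      moreover have "n - (n - m) = m" using mn by simp
      ultimately have "h m = 0" unfolding c_def by simp
      then show ?thesis unfolding h_def G_def by simp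
    qed
  qed
qed

lemma vand: "det (Amat n (\<lambda>j. n - 1 - j) x) = vdm n x"
proof (induction n arbitrary: x)
  case 0 then show ?case by (simp add: det_Amat_0 vdm_def)
next
  case (Suc n)
  have L1: "\<And>x. det (Amat n (gexp n 0) x) = vdm n x" using Suc.IH by (simp add: gexp0)
  have "det (Amat (Suc n) (\<lambda>j. Suc n - 1 - j) x) = (\<Sum>j<Suc n. x n ^ (n - j) * ((-1) ^ (j + n) * det (Amat n (gexp n j) x)))"
    using lap_vand by simp
  also have "\<dots> = vdm n x * (\<Sum>m\<le>n. esym m {..<n} x * (- x n) ^ (n - m))"
    unfolding lessThan_Suc_atMost sum_distrib_left
  proof (intro sum.cong refl)
    fix j assume j: "j \<in> {..n}"
    then have "(-1::complex) ^ (j + n) = (-1) ^ (n - j)" by (intro neg1_pow) simp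
    then show "x n ^ (n - j) * ((-1) ^ (j + n) * det (Amat n (gexp n j) x)) =
      vdm n x * (esym j {..<n} x * (- x n) ^ (n - j))"
      using coeff[OF L1, of j x] j by (simp add: power_minus' mult_ac)
  qed
  also have "\<dots> = vdm (Suc n) x" using vdm_Suc_expand by simp
  finally show ?case .
qed


lemma coeff_all: "m \<le> n \<Longrightarrow> det (Amat n (gexp n m) x) = esym m {..<n} x * vdm n x"
proof -
  have "\<And>x. det (Amat n (gexp n 0) x) = vdm n x" unfolding gexp0 by (rule vand)
  then show "m \<le> n \<Longrightarrow> ?thesis" by (rule coeff)
qed

lemma vdm_nonzero: "inj_on x {..<n} \<Longrightarrow> vdm n x \<noteq> 0"
proof -
  assume inj: "inj_on x {..<n}"
  have ne: "x i \<noteq> x j" if "i < n" "j \<in> {i<..<n}" for i j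
    using inj_onD[OF inj, of i j] that by auto
  show ?thesis unfolding vdm_def
    using ne by (auto simp: prod_zero_iff)
qed

definition dexp :: "nat \<Rightarrow> nat \<Rightarrow> nat \<Rightarrow> nat \<Rightarrow> nat" where
  "dexp n k m j = (if j = 0 then k + n - 1 - m else if j \<le> m then n - j else n - 1 - j)"

lemma D_expand:
  assumes "m < Suc n'"
  shows "det (Amat (Suc n') (dexp (Suc n') k m) x) =
    (\<Sum>a<Suc n'. x a ^ (k + n' - m) * ((-1) ^ a * (esym m {..<n'} (\<lambda>b. x (skip a b)) * vdm n' (\<lambda>b. x (skip a b)))))"
proof -
  have "det (Amat (Suc n') (dexp (Suc n') k m) x) = (\<Sum>a<Suc n'. x a ^ dexp (Suc n') k m 0 *
     ((-1) ^ a * det (Amat n' (\<lambda>j'. dexp (Suc n') k m (Suc j')) (\<lambda>b. x (skip a b)))))"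
    by (rule laplace_row0)
  also have "\<dots> = (\<Sum>a<Suc n'. x a ^ (k + n' - m) * ((-1) ^ a * (esym m {..<n'} (\<lambda>b. x (skip a b)) * vdm n' (\<lambda>b. x (skip a b)))))"
  proof (intro sum.cong refl)
    fix a
    have "(\<lambda>j'. dexp (Suc n') k m (Suc j')) = gexp n' m"
      by (auto simp: dexp_def gexp_def)
    then show "x a ^ dexp (Suc n') k m 0 * ((-1) ^ a * det (Amat n' (\<lambda>j'. dexp (Suc n') k m (Suc j')) (\<lambda>b. x (skip a b)))) =
      x a ^ (k + n' - m) * ((-1) ^ a * (esym m {..<n'} (\<lambda>b. x (skip a b)) * vdm n' (\<lambda>b. x (skip a b))))"
      using coeff_all[of m n' "\<lambda>b. x (skip a b)"] assms by (simp add: dexp_def)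
  qed
  finally show ?thesis .
qed

lemma D_zero:
  assumes "m < n" "k \<le> m" "1 \<le> k"
  shows "det (Amat n (dexp n k m) x) = 0"
proof (rule Amat_same_rows[where i=0 and c="m - k + 1" and n=n])
  show "dexp n k m 0 = dexp n k m (m - k + 1)"
    using assms unfolding dexp_def by (simp add: add.commute)
qed (use assms in simp_all)

lemma ChL_eq:
  assumes "m < n" "m < k"
  shows "ChL_hook n k (Suc m) x = det (Amat n (dexp n k m) x) / vdm n x"
proof -
  have "ChL_hook n k (Suc m) x = weyl_char n (hook_weight k (Suc m)) x"
    using assms unfolding ChL_hook_def by simp
  also have "\<dots> = det (Amat n (\<lambda>j. hook_weight k (Suc m) j + (n - 1 - j)) x) / vdm n x"
    unfolding weyl_char_def vdm_def[symmetric]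
    using det_Amat_perm[where n=n and x=x and e="\<lambda>j. hook_weight k (Suc m) j + (n - 1 - j)"] by simp
  also have "Amat n (\<lambda>j. hook_weight k (Suc m) j + (n - 1 - j)) x = Amat n (dexp n k m) x"
    by (rule Amat_cong) (use assms in \<open>auto simp: hook_weight_def dexp_def\<close>)
  finally show ?thesis .
qed


lemma qpow:
  assumes "m \<le> n'" "(q::complex) \<noteq> 0"
  shows "q powi (int n' - 2 * int m) = q ^ (n' - m) * inverse q ^ m"
proof -
  have "int n' - 2 * int m = int (n' - m) - int m" using assms by simp
  then have "q powi (int n' - 2 * int m) = q powi int (n' - m) / q powi int m"
    using power_int_diff[of q "int (n' - m)" "int m"] assms by simp
  then show ?thesis by (simp add: divide_inverse power_inverse)
qed

theorem lemma3p3: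
  fixes n k :: nat and q :: complex and x :: "nat \<Rightarrow> complex"
  assumes "n \<ge> 2" and "k \<ge> 1" and "q \<noteq> 0"
    and "inj_on x {..<n}"
  shows "(\<Sum>i=1..n. (-1) ^ (i - 1) * q powi (int n - 2 * int i + 1) * ChL_hook n k i x)
         = Ch_nk n k q x"
proof -
  obtain n' where n': "n = Suc n'" using assms(1) by (cases n) auto
  have V: "vdm n x \<noteq> 0" using vdm_nonzero[OF assms(4)] .
  define P where "P a = (\<Prod>j\<in>{..<n} - {a}. x a - x j)" for a
  have Pnz: "P a \<noteq> 0" if "a < n" for a
  proof -
    have "x a - x j \<noteq> 0" if "j \<in> {..<n} - {a}" for j
      using inj_onD[OF assms(4), of a j] that \<open>a < n\<close> by auto
    then show ?thesis unfolding P_def by (auto simp: prod_zero_iff)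
  qed
  define E where "E a m = esym m {..<n'} (\<lambda>b. x (skip a b))" for a m
  have rem: "(-1) ^ a * vdm n' (\<lambda>i. x (skip a i)) = vdm n x / P a" if "a < n" for a
    using vdm_remove[OF that, of x] Pnz[OF that] n' unfolding P_def[symmetric]
    by (simp add: field_simps)
  have keyA: "(-1) ^ (Suc m - 1) * q powi (int n - 2 * int (Suc m) + 1) * ChL_hook n k (Suc m) x =
      (-1) ^ m * q powi (int n' - 2 * int m) * (det (Amat n (dexp n k m) x) / vdm n x)" if m: "m < n" for m
  proof -
    have e: "int n - 2 * int (Suc m) + 1 = int n' - 2 * int m" using n' by simp
    have "ChL_hook n k (Suc m) x = det (Amat n (dexp n k m) x) / vdm n x"
    proof (cases "m < k")
      case True then show ?thesis using ChL_eq m by simp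
    next
      case False
      then show ?thesis using D_zero[of m n k x] m assms(2) by (simp add: ChL_hook_def)
    qed
    then show ?thesis unfolding e by simp
  qed
  have stepA: "(\<Sum>i=1..n. (-1) ^ (i - 1) * q powi (int n - 2 * int i + 1) * ChL_hook n k i x)
     = (\<Sum>m<n. (-1) ^ m * q powi (int n' - 2 * int m) * (det (Amat n (dexp n k m) x) / vdm n x))"
    unfolding One_nat_def sum.atLeast1_atMost_eq
    by (intro sum.cong refl) (use keyA in simp)
  have stepB: "det (Amat n (dexp n k m) x) / vdm n x = (\<Sum>a<n. x a ^ (k + n' - m) * E a m / P a)"
    if "m < n" for m
  proof -
    have "det (Amat n (dexp n k m) x) / vdm n x =
      (\<Sum>a<n. x a ^ (k + n' - m) * ((-1) ^ a * (E a m * vdm n' (\<lambda>b. x (skip a b))))) / vdm n x"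
      using D_expand[of m n' k x] that n' unfolding E_def by simp
    also have "\<dots> = (\<Sum>a<n. x a ^ (k + n' - m) * E a m / P a)"
      unfolding sum_divide_distrib
    proof (intro sum.cong refl)
      fix a assume "a \<in> {..<n}"
      then have a: "a < n" by simp
      have "x a ^ (k + n' - m) * ((-1) ^ a * (E a m * vdm n' (\<lambda>b. x (skip a b)))) =
        x a ^ (k + n' - m) * E a m * ((-1) ^ a * vdm n' (\<lambda>b. x (skip a b)))" by (simp only: mult_ac)
      also have "\<dots> = x a ^ (k + n' - m) * E a m * (vdm n x / P a)" using rem[OF a] by simp
      finally show "x a ^ (k + n' - m) * ((-1) ^ a * (E a m * vdm n' (\<lambda>b. x (skip a b)))) / vdm n x =
        x a ^ (k + n' - m) * E a m / P a" using V Pnz[OF a] by (simp add: field_simps)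
    qed
    finally show ?thesis .
  qed
  have stepC: "(\<Sum>m<n. (-1) ^ m * q powi (int n' - 2 * int m) * (x a ^ (k + n' - m) * E a m / P a)) =
     x a ^ k * (\<Prod>j\<in>{..<n} - {a}. q * x a - inverse q * x j) / P a" if a: "a < n" for a
  proof -
    have "(\<Prod>j\<in>{..<n} - {a}. q * x a - inverse q * x j) = (\<Prod>i<n'. q * x a + (- inverse q) * x (skip a i))"
      using prod_skip[of a n' "\<lambda>j. q * x a - inverse q * x j"] a n' by simp
    also have "\<dots> = (\<Sum>m\<le>n'. esym m {..<n'} (\<lambda>i. (- inverse q) * x (skip a i)) * (q * x a) ^ (n' - m))"
      by (rule prod_expand)
    also have "\<dots> = (\<Sum>m\<le>n'. (- inverse q) ^ m * E a m * (q * x a) ^ (n' - m))"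
      unfolding esym_scale E_def ..
    finally have pr: "(\<Prod>j\<in>{..<n} - {a}. q * x a - inverse q * x j) = (\<Sum>m\<le>n'. (- inverse q) ^ m * E a m * (q * x a) ^ (n' - m))" .
    show ?thesis unfolding pr unfolding n' lessThan_Suc_atMost sum_distrib_left sum_divide_distrib
    proof (intro sum.cong refl)
      fix m assume "m \<in> {..n'}"
      then have m: "m \<le> n'" by simp
      have xe: "x a ^ (k + n' - m) = x a ^ k * x a ^ (n' - m)" using m by (simp add: power_add[symmetric])
      show "(-1) ^ m * q powi (int n' - 2 * int m) * (x a ^ (k + n' - m) * E a m / P a) =
        x a ^ k * ((- inverse q) ^ m * E a m * (q * x a) ^ (n' - m)) / P a"
        unfolding qpow[OF m assms(3)] xe
        by (simp add: power_mult_distrib power_minus' mult_ac)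
    qed
  qed
  have stepD: "Ch_nk n k q x = (\<Sum>a<n. x a ^ k * (\<Prod>j\<in>{..<n} - {a}. q * x a - inverse q * x j) / P a)"
    unfolding Ch_nk_def P_def by (simp add: prod_dividef)
  have "(\<Sum>i=1..n. (-1) ^ (i - 1) * q powi (int n - 2 * int i + 1) * ChL_hook n k i x)
     = (\<Sum>m<n. \<Sum>a<n. (-1) ^ m * q powi (int n' - 2 * int m) * (x a ^ (k + n' - m) * E a m / P a))"
    unfolding stepA by (intro sum.cong refl) (simp add: stepB sum_distrib_left)
  also have "\<dots> = (\<Sum>a<n. \<Sum>m<n. (-1) ^ m * q powi (int n' - 2 * int m) * (x a ^ (k + n' - m) * E a m / P a))"
    by (rule sum.swap)
  also have "\<dots> = Ch_nk n k q x"
    unfolding stepD by (rule sum.cong[OF refl], rule stepC) simp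
  finally show ?thesis .
qed

end
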